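(* Let $G$ be a bipartite graph with bipartition $A\cup B$ and minimum degree $\delta$, such that $|A|\ge |B|$. Then there are sequences of nonempty subsets $A=A_0\supseteq A_1\supseteq\dots\supseteq A_\delta$ and $B=B_0\supseteq B_1\supseteq\dots\supseteq B_\delta$, and pairwise edge-disjoint matchings $M_1,\dots,M_\delta$, such that $|A_i|=|B_i|$ for each $1\le i\le\delta$, and each $M_i$ is a perfect matching of $G[A_i\cup B_i]$. *)

theory Defs
  imports Main
begin

definition bipartite_graph :: "'v set \<Rightarrow> 'v set \<Rightarrow> ('v \<times> 'v) set \<Rightarrow> bool" where
  "bipartite_graph A B E \<longleftrightarrow> finite A \<and> finite B \<and> A \<inter> B = {} \<and> E \<subseteq> A \<times> B"

definition degree :: "('v \<times> 'v) set \<Rightarrow> 'v \<Rightarrow> nat" where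
  "degree E v = card {u. (v, u) \<in> E \<or> (u, v) \<in> E}"

definition min_degree :: "'v set \<Rightarrow> 'v set \<Rightarrow> ('v \<times> 'v) set \<Rightarrow> nat" where
  "min_degree A B E = Min (degree E ` (A \<union> B))"

definition perfect_matching_of :: "('v \<times> 'v) set \<Rightarrow> 'v set \<Rightarrow> 'v set \<Rightarrow> ('v \<times> 'v) set \<Rightarrow> bool" where
  "perfect_matching_of E X Y M \<longleftrightarrow>
     M \<subseteq> E \<inter> (X \<times> Y) \<and>
     (\<forall>x\<in>X. \<exists>!y. (x, y) \<in> M) \<and>
     (\<forall>y\<in>Y. \<exists>!x. (x, y) \<in> M)"

end

theory Submission
  imports Defs
begin
lemma hall:
  "finite T \<Longrightarrow> finite (R``T) \<Longrightarrow> (\<forall>S\<subseteq>T. card S \<le> card (R``S))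
   \<Longrightarrow> \<exists>f. inj_on f T \<and> (\<forall>t\<in>T. (t, f t) \<in> R)"
proof (induction "card T" arbitrary: T R rule: less_induct)
  case less
  show ?case
  proof (cases "T = {}")
    case True then show ?thesis by auto
  next
    case Tne: False
    show ?thesis
    proof (cases "\<exists>S. S \<noteq> {} \<and> S \<subset> T \<and> card (R``S) = card S")
      case True
      then obtain S where S: "S \<noteq> {}" "S \<subset> T" "card (R``S) = card S" by blast
      have fS: "finite S" using S less.prems(1) finite_subset by blast
      have fRS: "finite (R``S)" using S(2) less.prems(2) by (meson Image_mono finite_subset order_refl psubset_imp_subset)
      have "card S < card T" using S less.prems(1) psubset_card_mono by blast
      from less.hyps[OF this fS fRS] less.prems(3) S(2)
      obtain f1 where f1: "inj_on f1 S" "\<forall>t\<in>S. (t, f1 t) \<in> R" by auto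
      define R2 where "R2 = {(t,b). (t,b) \<in> R \<and> b \<notin> R``S}"
      have R2im: "R2``U = R``U - R``S" for U unfolding R2_def by auto
      have c2: "card (T - S) < card T" using S less.prems(1)
      proof -
        have "card (T - S) = card T - card S" using S(2) fS by (simp add: card_Diff_subset psubset_imp_subset)
        moreover have "card S > 0" using S(1) fS by auto
        moreover have "card S \<le> card T" using S(2) less.prems(1) by (simp add: card_mono psubset_imp_subset)
        ultimately show ?thesis by linarith
      qed
      have f2: "finite (T - S)" using less.prems(1) by auto
      have fR2: "finite (R2``(T - S))" unfolding R2im
        using less.prems(2) by (meson Diff_subset Image_mono finite_Diff finite_subset order_refl)
      have hall2: "\<forall>U\<subseteq>T - S. card U \<le> card (R2``U)"
      proof (intro allI impI)
        fix U assume U: "U \<subseteq> T - S"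
        have fU: "finite U" using U f2 finite_subset by blast
        have fRU: "finite (R``U)" using U less.prems(2)
          by (meson Diff_subset Image_mono finite_subset order_refl subset_trans)
        have "U \<union> S \<subseteq> T" using U S(2) by auto
        then have "card (U \<union> S) \<le> card (R``(U \<union> S))" using less.prems(3) by blast
        moreover have "card (U \<union> S) = card U + card S" using U fU fS by (subst card_Un_disjoint) auto
        moreover have "card (R``(U \<union> S)) = card (R``U - R``S) + card (R``S)"
        proof -
          have "R``(U \<union> S) = (R``U - R``S) \<union> R``S" by auto
          moreover have "card ((R``U - R``S) \<union> R``S) = card (R``U - R``S) + card (R``S)"
            using fRU fRS by (intro card_Un_disjoint) auto
          ultimately show ?thesis by simp
        qed
        ultimately show "card U \<le> card (R2``U)" unfolding R2im using S(3) by linarith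
      qed
      from less.hyps[OF c2 f2 fR2 hall2]
      obtain f2 where f2: "inj_on f2 (T - S)" "\<forall>t\<in>T - S. (t, f2 t) \<in> R2" by auto
      define f where "f t = (if t \<in> S then f1 t else f2 t)" for t
      have "inj_on f T"
      proof (rule inj_onI)
        fix x y assume xy: "x \<in> T" "y \<in> T" "f x = f y"
        show "x = y"
        proof (cases "x \<in> S"; cases "y \<in> S")
          assume "x \<in> S" "y \<in> S" then show ?thesis using xy f1 unfolding f_def by (auto dest: inj_onD)
        next
          assume "x \<notin> S" "y \<notin> S" then show ?thesis using xy f2 unfolding f_def by (auto dest: inj_onD)
        next
          assume a: "x \<in> S" "y \<notin> S"
          then have "f2 y \<notin> R``S" using f2 xy unfolding R2_def by auto
          moreover have "f1 x \<in> R``S" using a f1 by auto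
          ultimately show ?thesis using xy a unfolding f_def by auto
        next
          assume a: "x \<notin> S" "y \<in> S"
          then have "f2 x \<notin> R``S" using f2 xy unfolding R2_def by auto
          moreover have "f1 y \<in> R``S" using a f1 by auto
          ultimately show ?thesis using xy a unfolding f_def by auto
        qed
      qed
      moreover have "\<forall>t\<in>T. (t, f t) \<in> R" using f1 f2 unfolding f_def R2_def by auto
      ultimately show ?thesis by blast
    next
      case False
      then have strict: "\<forall>S. S \<noteq> {} \<and> S \<subset> T \<longrightarrow> card S < card (R``S)"
        using less.prems(3) by (metis le_neq_implies_less psubset_imp_subset)
      obtain t where t: "t \<in> T" using Tne by blast
      have "1 \<le> card {t}" by simp
      also have "\<dots> \<le> card (R``{t})" using less.prems(3) t by auto
      finally have "R``{t} \<noteq> {}" by auto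
      then obtain b where b: "(t,b) \<in> R" by auto
      define R' where "R' = {(s,c). (s,c) \<in> R \<and> c \<noteq> b}"
      have R'im: "R'``U = R``U - {b}" for U unfolding R'_def by auto
      have c1: "card (T - {t}) < card T" using t less.prems(1) by (metis card_Diff1_less)
      have f1: "finite (T - {t})" using less.prems(1) by auto
      have fR1: "finite (R'``(T - {t}))" unfolding R'im
        using less.prems(2) by (meson Diff_subset Image_mono finite_Diff finite_subset order_refl)
      have hall1: "\<forall>U\<subseteq>T - {t}. card U \<le> card (R'``U)"
      proof (intro allI impI)
        fix U assume U: "U \<subseteq> T - {t}"
        show "card U \<le> card (R'``U)"
        proof (cases "U = {}")
          case True then show ?thesis by simp
        next
          case False
          have "U \<subset> T" using U t by auto
          then have "card U < card (R``U)" using strict False by blast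
          moreover have "card (R``U - {b}) \<ge> card (R``U) - 1"
            by (cases "b \<in> R``U") (auto simp: card_Diff_singleton_if)
          ultimately show ?thesis unfolding R'im by linarith
        qed
      qed
      from less.hyps[OF c1 f1 fR1 hall1]
      obtain g where g: "inj_on g (T - {t})" "\<forall>s\<in>T - {t}. (s, g s) \<in> R'" by auto
      define f where "f = g(t := b)"
      have "inj_on f T"
      proof (rule inj_onI)
        fix x y assume xy: "x \<in> T" "y \<in> T" "f x = f y"
        show "x = y"
          using xy g unfolding f_def R'_def
          by (cases "x = t"; cases "y = t") (auto dest: inj_onD)
      qed
      moreover have "\<forall>s\<in>T. (s, f s) \<in> R" using g b unfolding f_def R'_def by auto
      ultimately show ?thesis by blast
    qed
  qed
qed

lemma pm_mono: "perfect_matching_of E' X Y M \<Longrightarrow> E' \<subseteq> E \<Longrightarrow> perfect_matching_of E X Y M"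
  unfolding perfect_matching_of_def by blast

lemma step_set:
  assumes "finite X" "finite Y" "E \<subseteq> X \<times> Y" "X \<noteq> {}" "card Y \<le> card X"
    and deg: "\<forall>x\<in>X. 1 \<le> card (E``{x})"
  shows "\<exists>T f. T \<subseteq> X \<and> T \<noteq> {} \<and> card (E``T) = card T \<and> inj_on f T \<and> (\<forall>t\<in>T. (t, f t) \<in> E)"
proof -
  define P where "P T \<longleftrightarrow> T \<subseteq> X \<and> T \<noteq> {} \<and> card (E``T) \<le> card T" for T
  have fim: "finite (E``S)" for S
  proof -
    have "E``S \<subseteq> Y" using assms(3) by auto
    then show ?thesis using assms(2) finite_subset by blast
  qed
  have "E``X \<subseteq> Y" using assms(3) by auto
  then have "card (E``X) \<le> card X" using assms(2,5) card_mono by (meson le_trans)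
  then have "P X" unfolding P_def using assms(4) by auto
  then obtain T where T: "P T" and Tmin: "\<forall>T'. P T' \<longrightarrow> card T \<le> card T'"
    using ex_has_least_nat[of P X card] by blast
  have fT: "finite T" using T assms(1) unfolding P_def using finite_subset by blast
  have strict: "card S < card (E``S)" if "S \<noteq> {}" "S \<subset> T" for S
  proof -
    have "card S < card T" using that fT psubset_card_mono by blast
    then have "\<not> P S" using Tmin by auto
    then show ?thesis using that T unfolding P_def by auto
  qed
  have geT: "card T \<le> card (E``T)"
  proof (cases "card T = 1")
    case True
    then obtain t where "T = {t}" using card_1_singletonE by blast
    then show ?thesis using deg T unfolding P_def by auto
  next
    case False
    obtain t where t: "t \<in> T" using T unfolding P_def by auto
    have "card (T - {t}) = card T - 1" using t fT by simp
    moreover have "card T > 0" using t fT card_gt_0_iff by blast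
    have ne: "T - {t} \<noteq> {}"
    proof
      assume "T - {t} = {}"
      then have "T = {t}" using t by auto
      then show False using False by simp
    qed
    have "card (T - {t}) < card (E``(T - {t}))" using strict[OF ne] t by auto
    moreover have "card (E``(T - {t})) \<le> card (E``T)" using fim by (intro card_mono) auto
    ultimately show ?thesis using \<open>card (T - {t}) = card T - 1\<close> \<open>card T > 0\<close> by linarith
  qed
  have hall_c: "\<forall>S\<subseteq>T. card S \<le> card (E``S)"
  proof (intro allI impI)
    fix S assume "S \<subseteq> T"
    then consider "S = {}" | "S = T" | "S \<noteq> {} \<and> S \<subset> T" by blast
    then show "card S \<le> card (E``S)"
    proof cases
      case 1 then show ?thesis by simp
    next
      case 2 then show ?thesis using geT by simp
    next
      case 3 then show ?thesis using strict[of S] by simp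
    qed
  qed
  obtain f where "inj_on f T" "\<forall>t\<in>T. (t, f t) \<in> E" using hall[OF fT fim hall_c] by blast
  moreover have "card (E``T) = card T" using geT T unfolding P_def by auto
  ultimately show ?thesis using T unfolding P_def by blast
qed


lemma main_ind:
  "finite X \<Longrightarrow> finite Y \<Longrightarrow> E \<subseteq> X \<times> Y \<Longrightarrow> X \<noteq> {} \<Longrightarrow> Y \<noteq> {} \<Longrightarrow> card Y \<le> card X \<Longrightarrow>
   (\<forall>x\<in>X. k \<le> card (E``{x})) \<Longrightarrow>
   \<exists>As Bs :: nat \<Rightarrow> 'v set. \<exists>Ms :: nat \<Rightarrow> ('v \<times> 'v) set.
           As 0 = X \<and> Bs 0 = Y \<and>
           (\<forall>i\<le>k. As i \<noteq> {} \<and> Bs i \<noteq> {}) \<and>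
           (\<forall>i<k. As (Suc i) \<subseteq> As i \<and> Bs (Suc i) \<subseteq> Bs i) \<and>
           (\<forall>i\<in>{1..k}. \<forall>j\<in>{1..k}. i \<noteq> j \<longrightarrow> Ms i \<inter> Ms j = {}) \<and>
           (\<forall>i\<in>{1..k}. card (As i) = card (Bs i) \<and> perfect_matching_of E (As i) (Bs i) (Ms i))"
proof (induction k arbitrary: X Y E)
  case 0
  show ?case
    by (rule exI[of _ "\<lambda>_. X"], rule exI[of _ "\<lambda>_. Y"], rule exI[of _ "\<lambda>_. {}"]) (use 0 in auto)
next
  case (Suc k)
  have deg1: "\<forall>x\<in>X. 1 \<le> card (E``{x})" using Suc.prems(7) by auto
  obtain T f where T: "T \<subseteq> X" "T \<noteq> {}" "card (E``T) = card T" and f: "inj_on f T" "\<forall>t\<in>T. (t, f t) \<in> E"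
    using step_set[OF Suc.prems(1-4,6) deg1] by blast
  define N where "N = E``T"
  have NY: "N \<subseteq> Y" using Suc.prems(3) unfolding N_def by auto
  have fN: "finite N" using NY Suc.prems(2) finite_subset by blast
  have fT: "finite T" using T(1) Suc.prems(1) finite_subset by blast
  have fTN: "f ` T \<subseteq> N" using f unfolding N_def by auto
  have cN: "card N = card T" using T(3) unfolding N_def by simp
  have fTeq: "f ` T = N"
    using card_subset_eq[OF fN fTN] card_image[OF f(1)] cN by simp
  define M where "M = (\<lambda>t. (t, f t)) ` T"
  define E' where "E' = (E \<inter> (T \<times> N)) - M"
  have pmM: "perfect_matching_of E T N M"
    unfolding perfect_matching_of_def
  proof (intro conjI ballI)
    show "M \<subseteq> E \<inter> T \<times> N" unfolding M_def using f fTN by auto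
  next
    fix x assume "x \<in> T" then show "\<exists>!y. (x, y) \<in> M" unfolding M_def by auto
  next
    fix y assume "y \<in> N"
    then obtain x where x: "x \<in> T" "y = f x" using fTeq by blast
    show "\<exists>!x. (x, y) \<in> M"
    proof (rule ex1I[of _ x])
      show "(x, y) \<in> M" unfolding M_def using x by auto
    next
      fix x' assume "(x', y) \<in> M"
      then have "x' \<in> T" "y = f x'" unfolding M_def by auto
      then show "x' = x" using x f(1) by (auto dest: inj_onD)
    qed
  qed
  have E'sub: "E' \<subseteq> T \<times> N" unfolding E'_def by auto
  have TneN: "N \<noteq> {}" using cN T(2) fT by auto
  have degE': "\<forall>x\<in>T. k \<le> card (E'``{x})"
  proof
    fix x assume x: "x \<in> T"
    have "E'``{x} = E``{x} - {f x}"
    proof -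
      have "E``{x} \<subseteq> N" using x unfolding N_def by auto
      moreover have "(x, y) \<in> M \<longleftrightarrow> y = f x" for y unfolding M_def using x by auto
      ultimately show ?thesis unfolding E'_def using x by auto
    qed
    moreover have "finite (E``{x})" using fN \<open>x \<in> T\<close> unfolding N_def
      by (meson Image_mono empty_subsetI finite_subset insert_subset order_refl)
    moreover have "Suc k \<le> card (E``{x})" using Suc.prems(7) x T(1) by auto
    moreover have "f x \<in> E``{x}" using f(2) x by auto
    ultimately show "k \<le> card (E'``{x})" by (simp add: card_Diff_singleton)
  qed
  obtain As Bs Ms where IH:
    "As 0 = T" "Bs 0 = N"
    "\<forall>i\<le>k. As i \<noteq> {} \<and> Bs i \<noteq> {}"
    "\<forall>i<k. As (Suc i) \<subseteq> As i \<and> Bs (Suc i) \<subseteq> Bs i"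
    "\<forall>i\<in>{1..k}. \<forall>j\<in>{1..k}. i \<noteq> j \<longrightarrow> Ms i \<inter> Ms j = {}"
    "\<forall>i\<in>{1..k}. card (As i) = card (Bs i) \<and> perfect_matching_of E' (As i) (Bs i) (Ms i)"
    using Suc.IH[OF fT fN E'sub T(2) TneN _ degE'] cN by auto
  have MsE': "Ms i \<subseteq> E'" if "i \<in> {1..k}" for i
    using IH(6) that unfolding perfect_matching_of_def by blast
  have E'E: "E' \<subseteq> E" unfolding E'_def by auto
  have E'M: "E' \<inter> M = {}" unfolding E'_def by auto
  define As2 where "As2 i = (if i = 0 then X else As (i - 1))" for i
  define Bs2 where "Bs2 i = (if i = 0 then Y else Bs (i - 1))" for i
  define Ms2 where "Ms2 i = (if i = 1 then M else Ms (i - 1))" for i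
  show ?case
  proof (rule exI[of _ As2], rule exI[of _ Bs2], rule exI[of _ Ms2], intro conjI)
    show "As2 0 = X" "Bs2 0 = Y" unfolding As2_def Bs2_def by auto
  next
    show "\<forall>i\<le>Suc k. As2 i \<noteq> {} \<and> Bs2 i \<noteq> {}"
      unfolding As2_def Bs2_def using IH(3) Suc.prems(4,5) by (auto simp: le_diff_conv)
  next
    show "\<forall>i<Suc k. As2 (Suc i) \<subseteq> As2 i \<and> Bs2 (Suc i) \<subseteq> Bs2 i"
    proof (intro allI impI)
      fix i assume i: "i < Suc k"
      show "As2 (Suc i) \<subseteq> As2 i \<and> Bs2 (Suc i) \<subseteq> Bs2 i"
      proof (cases i)
        case 0 then show ?thesis unfolding As2_def Bs2_def using IH(1,2) T(1) NY by auto
      next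
        case (Suc j) then show ?thesis unfolding As2_def Bs2_def using IH(4) i by auto
      qed
    qed
  next
    show "\<forall>i\<in>{1..Suc k}. \<forall>j\<in>{1..Suc k}. i \<noteq> j \<longrightarrow> Ms2 i \<inter> Ms2 j = {}"
    proof (intro ballI impI)
      fix i j assume i: "i \<in> {1..Suc k}" and j: "j \<in> {1..Suc k}" and ij: "i \<noteq> j"
      show "Ms2 i \<inter> Ms2 j = {}"
      proof (cases "i = 1"; cases "j = 1")
        assume "i = 1" "j \<noteq> 1"
        moreover have "j - 1 \<in> {1..k}" using j \<open>j \<noteq> 1\<close> by auto
        ultimately have "Ms2 j \<subseteq> E'" "Ms2 i = M" using MsE'[of "j - 1"] unfolding Ms2_def by auto
        then show ?thesis using E'M by auto
      next
        assume "i \<noteq> 1" "j = 1"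
        moreover have "i - 1 \<in> {1..k}" using i \<open>i \<noteq> 1\<close> by auto
        ultimately have "Ms2 i \<subseteq> E'" "Ms2 j = M" using MsE'[of "i - 1"] unfolding Ms2_def by auto
        then show ?thesis using E'M by auto
      next
        assume "i \<noteq> 1" "j \<noteq> 1"
        moreover have "i - 1 \<in> {1..k}" "j - 1 \<in> {1..k}" "i - 1 \<noteq> j - 1"
          using i j ij \<open>i \<noteq> 1\<close> \<open>j \<noteq> 1\<close> by auto
        ultimately show ?thesis using IH(5) unfolding Ms2_def by auto
      qed (use ij in auto)
    qed
  next
    show "\<forall>i\<in>{1..Suc k}. card (As2 i) = card (Bs2 i) \<and> perfect_matching_of E (As2 i) (Bs2 i) (Ms2 i)"
    proof
      fix i assume i: "i \<in> {1..Suc k}"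
      show "card (As2 i) = card (Bs2 i) \<and> perfect_matching_of E (As2 i) (Bs2 i) (Ms2 i)"
      proof (cases "i = 1")
        case True then show ?thesis unfolding As2_def Bs2_def Ms2_def using IH(1,2) pmM cN by auto
      next
        case False
        then have i1: "i - 1 \<in> {1..k}" using i by auto
        then show ?thesis using IH(6) pm_mono[OF _ E'E] i False unfolding As2_def Bs2_def Ms2_def by auto
      qed
    qed
  qed
qed


theorem lemma2p2:
  fixes A B :: "'v set" and E :: "('v \<times> 'v) set" and \<delta> :: nat
  assumes "bipartite_graph A B E"
    and "A \<noteq> {}" and "B \<noteq> {}"
    and "\<delta> = min_degree A B E"
    and "card A \<ge> card B"
  shows "\<exists>As Bs :: nat \<Rightarrow> 'v set. \<exists>Ms :: nat \<Rightarrow> ('v \<times> 'v) set.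
           As 0 = A \<and> Bs 0 = B \<and>
           (\<forall>i\<le>\<delta>. As i \<noteq> {} \<and> Bs i \<noteq> {}) \<and>
           (\<forall>i<\<delta>. As (Suc i) \<subseteq> As i \<and> Bs (Suc i) \<subseteq> Bs i) \<and>
           (\<forall>i\<in>{1..\<delta>}. \<forall>j\<in>{1..\<delta>}. i \<noteq> j \<longrightarrow> Ms i \<inter> Ms j = {}) \<and>
           (\<forall>i\<in>{1..\<delta>}. card (As i) = card (Bs i) \<and> perfect_matching_of E (As i) (Bs i) (Ms i))"
proof -
  have bg: "finite A" "finite B" "A \<inter> B = {}" "E \<subseteq> A \<times> B"
    using assms(1) unfolding bipartite_graph_def by auto
  have deg: "\<forall>x\<in>A. \<delta> \<le> card (E``{x})"
  proof
    fix x assume x: "x \<in> A"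
    have "{u. (x, u) \<in> E \<or> (u, x) \<in> E} = E``{x}" using x bg(3,4) by auto
    then have "degree E x = card (E``{x})" unfolding degree_def by simp
    moreover have "\<delta> \<le> degree E x" unfolding assms(4) min_degree_def
      using x bg(1,2) by (intro Min_le) auto
    ultimately show "\<delta> \<le> card (E``{x})" by simp
  qed
  show ?thesis using main_ind[OF bg(1,2,4) assms(2,3,5) deg] .
qed

end
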